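(* For all $k,n\in\mathbb{N}_0$, $$\rho_k(n)+k\,\rho_k(\infty)<(k+1)\,\rho_k(n+1).$$
   Context: For $k\in\mathbb{N}_0$ put $t=k+2$ and define $u_0=0$, $u_1=1$, $u_{i+2}=tu_{i+1}-u_i$; $\rho_k(0)=0$ and $\rho_k(n)=1+\frac{u_{n-1}}{u_n+1}$ for $n\in\mathbb{N}$; $\rho_k(\infty)=\lim_{n\to\infty}\rho_k(n)$ (equal to $2$ for $k=0$). *)

theory Defs
  imports Complex_Main
begin

fun u :: "nat \<Rightarrow> nat \<Rightarrow> real" where
  "u k 0 = 0"
| "u k (Suc 0) = 1"
| "u k (Suc (Suc i)) = (real k + 2) * u k (Suc i) - u k i"

definition rho :: "nat \<Rightarrow> nat \<Rightarrow> real" where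
  "rho k n = (if n = 0 then 0 else 1 + u k (n - 1) / (u k n + 1))"

definition rho_inf :: "nat \<Rightarrow> real" where
  "rho_inf k = lim (\<lambda>n. rho k n)"

end

theory Submission
  imports Defs
begin

lemma u_step: "u k (Suc (Suc i)) = (real k + 2) * u k (Suc i) - u k i"
  by simp

lemma u_inc: "u k (Suc n) - u k n \<ge> 1 \<and> u k n \<ge> 0"
proof (induction n)
  case 0 then show ?case by simp
next
  case (Suc n)
  have "u k (Suc (Suc n)) - u k (Suc n) = real k * u k (Suc n) + (u k (Suc n) - u k n)"
    by (simp add: algebra_simps)
  moreover have "real k * u k (Suc n) \<ge> 0" using Suc by simp
  ultimately show ?case using Suc by linarith
qed

lemma u_ge: "u k n \<ge> real n"
proof (induction n)
  case 0 then show ?case by simp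
next
  case (Suc n) then show ?case using u_inc[of k n] by simp
qed

lemma u_mono: "m \<le> n \<Longrightarrow> u k m \<le> u k n"
proof -
  have "incseq (u k)"
  proof (rule incseq_SucI)
    fix n show "u k n \<le> u k (Suc n)" using u_inc[of k n] by linarith
  qed
  then show "m \<le> n \<Longrightarrow> u k m \<le> u k n" by (simp add: incseq_def)
qed

lemma u_err:
  assumes q: "\<mu>^2 + 1 = (real k + 2) * \<mu>"
  shows "\<mu> * u k (Suc n) - u k n = \<mu> ^ Suc n"
proof (induction n)
  case 0 then show ?case by simp
next
  case (Suc n)
  have "\<mu> * u k (Suc (Suc n)) - u k (Suc n) = ((real k + 2) * \<mu> - 1) * u k (Suc n) - \<mu> * u k n"
    by (simp add: algebra_simps)
  also have "\<dots> = \<mu> * (\<mu> * u k (Suc n) - u k n)"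
  proof -
    have "(real k + 2) * \<mu> - 1 = \<mu> * \<mu>" using q by (simp add: power2_eq_square)
    then show ?thesis by (simp add: algebra_simps)
  qed
  also have "\<dots> = \<mu> ^ Suc (Suc n)" using Suc by simp
  finally show ?case .
qed

lemma mu_exists: "\<exists>\<mu>::real. 0 < \<mu> \<and> \<mu> \<le> 1 \<and> \<mu>^2 + 1 = (real k + 2) * \<mu>"
proof -
  define t where "t = real k + 2"
  define s where "s = sqrt (t^2 - 4)"
  have t2: "t \<ge> 2" unfolding t_def by simp
  have t4: "t^2 \<ge> 4" using t2 power_mono[of 2 t 2] by simp
  have s0: "s \<ge> 0" and ss: "s^2 = t^2 - 4" unfolding s_def using t4 by auto
  have st: "s < t"
  proof -
    have "s^2 < t^2" using ss by simp
    then show ?thesis using s0 t2 by (smt (verit) power_mono)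
  qed
  have st2: "t - 2 \<le> s"
  proof -
    have "(t-2)^2 \<le> s^2" using ss t2 by (simp add: power2_eq_square algebra_simps)
    then show ?thesis using s0 t2 by (meson power2_le_imp_le)
  qed
  show ?thesis
    apply (rule exI[of _ "(t - s)/2"])
    using st st2 ss unfolding t_def[symmetric]
    by (auto simp: field_simps power2_eq_square)
qed

lemma rho_lim:
  assumes m0: "0 < \<mu>" and m1: "\<mu> \<le> 1" and q: "\<mu>^2 + 1 = (real k + 2) * \<mu>"
  shows "rho k \<longlonglongrightarrow> 1 + \<mu>"
proof -
  define d where "d n = (\<mu> + \<mu> ^ Suc n) / (u k (Suc n) + 1)" for n
  have rs: "rho k (Suc n) = 1 + \<mu> - d n" for n
  proof -
    have up: "u k (Suc n) + 1 > 0" using u_ge[where k=k and n="Suc n"] by simp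
    have "u k n = \<mu> * u k (Suc n) - \<mu> ^ Suc n" using u_err[OF q, of n] by simp
    then show ?thesis unfolding rho_def d_def using up
      by (simp add: field_simps)
  qed
  have dlim: "d \<longlonglongrightarrow> 0"
  proof (rule tendsto_sandwich[of "\<lambda>n. 0" _ _ "\<lambda>n. 2 * inverse (real (Suc n))"])
    show "\<forall>\<^sub>F n in sequentially. 0 \<le> d n"
    proof (intro always_eventually allI)
      fix n
      have "u k (Suc n) \<ge> 1" using u_ge[where k=k and n="Suc n"] by simp
      moreover have "\<mu> + \<mu> ^ Suc n > 0" using m0 zero_less_power[of \<mu> "Suc n"] by linarith
      ultimately show "0 \<le> d n" unfolding d_def by simp
    qed
    show "\<forall>\<^sub>F n in sequentially. d n \<le> 2 * inverse (real (Suc n))"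
    proof (intro always_eventually allI)
      fix n
      have a: "\<mu> + \<mu> ^ Suc n \<le> 2" using m1 m0 power_le_one[of \<mu> "Suc n"] by simp
      have b: "u k (Suc n) + 1 \<ge> real (Suc n)" using u_ge[where k=k and n="Suc n"] by simp
      have "d n \<le> 2 / (u k (Suc n) + 1)" unfolding d_def
        using a b by (intro divide_right_mono) auto
      also have "\<dots> \<le> 2 / real (Suc n)" using b by (intro divide_left_mono) auto
      finally show "d n \<le> 2 * inverse (real (Suc n))" by (simp add: field_simps)
    qed
    show "(\<lambda>n. 0) \<longlonglongrightarrow> (0::real)" by simp
    show "(\<lambda>n. 2 * inverse (real (Suc n))) \<longlonglongrightarrow> 0"
      using tendsto_mult[OF tendsto_const LIMSEQ_inverse_real_of_nat, of 2] by simp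
  qed
  have "(\<lambda>n. rho k (Suc n)) \<longlonglongrightarrow> 1 + \<mu>"
    unfolding rs using tendsto_diff[OF tendsto_const dlim, of "1+\<mu>"] by simp
  then show ?thesis by (rule LIMSEQ_imp_Suc)
qed

theorem lemma3:
  fixes k n :: nat
  shows "rho k n + real k * rho_inf k < (real k + 1) * rho k (n + 1)"
proof -
  obtain \<mu> :: real where m0: "0 < \<mu>" and m1: "\<mu> \<le> 1" and q: "\<mu>^2 + 1 = (real k + 2) * \<mu>"
    using mu_exists by blast
  have ri: "rho_inf k = 1 + \<mu>" unfolding rho_inf_def using rho_lim[OF m0 m1 q] by (rule limI)
  have km: "real k * \<mu> < 1"
  proof -
    have "real k * \<mu> = (1 - \<mu>)^2" using q by (simp add: algebra_simps power2_eq_square)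
    also have "\<dots> < 1"
    proof -
      have "(1-\<mu>)*(1-\<mu>) \<le> (1-\<mu>)*1" using m0 m1 by (intro mult_left_mono) auto
      then show ?thesis using m0 by (simp add: power2_eq_square)
    qed
    finally show ?thesis .
  qed
  show ?thesis
  proof (cases n)
    case 0
    then show ?thesis unfolding ri using km by (simp add: rho_def algebra_simps)
  next
    case (Suc m)
    define a where "a = \<mu> ^ m"
    define B where "B = u k (Suc m)"
    define A where "A = u k m"
    define C where "C = u k (Suc (Suc m))"
    have a0: "0 < a" "a \<le> 1" unfolding a_def using m0 m1 by (auto simp: power_le_one)
    have A: "A = \<mu> * B - \<mu> * a" using u_err[OF q, of m] unfolding A_def B_def a_def by simp
    have C: "C = (real k + 2) * B - A" unfolding A_def B_def C_def by simp
    have B1: "B \<ge> 1" using u_ge[where k=k and n="Suc m"] unfolding B_def by simp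
    have C1: "C \<ge> 1" using u_ge[where k=k and n="Suc (Suc m)"] unfolding C_def by simp
    have key: "(1+a)*(C+1) - (real k+1)*(1+\<mu>*a)*(B+1) = (1-\<mu>)*(1+(real k+2)*a)*B + (1+\<mu>*a)*(a - real k)"
      unfolding C A using q by (simp add: algebra_simps power2_eq_square)
    have pos: "(1-\<mu>)*(1+(real k+2)*a)*B + (1+\<mu>*a)*(a - real k) > 0"
    proof (cases "k = 0")
      case True
      have "(1-\<mu>)*(1+(real k+2)*a)*B \<ge> 0" using m1 a0 B1 by simp
      moreover have "(1+\<mu>*a)*(a - real k) > 0" using True m0 a0 by (simp, intro mult_pos_pos add_pos_pos) auto
      ultimately show ?thesis by linarith
    next
      case False
      show ?thesis
      proof (cases m)
        case 0
        then have "a = 1" "B = 1" unfolding a_def B_def by simp_all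
        then show ?thesis using km m1 by (simp add: algebra_simps)
      next
        case (Suc m')
        have "B \<ge> u k 2" unfolding B_def using Suc by (intro u_mono) simp
        then have "B \<ge> real k + 2" by (simp add: numeral_2_eq_2)
        then have "(1-\<mu>)*B \<ge> (1-\<mu>)*(real k+2)" using m1 by (intro mult_left_mono) auto
        moreover have "(1-\<mu>)*(real k+2) \<ge> real k" using q m1 m0
          by (simp add: algebra_simps power2_eq_square) (smt (verit) mult_le_one)
        ultimately have h: "(1-\<mu>)*B \<ge> real k" by linarith
        have "(1-\<mu>)*(1+(real k+2)*a)*B = ((1-\<mu>)*B)*(1+(real k+2)*a)" by simp
        also have "\<dots> \<ge> real k * (1+(real k+2)*a)" using h a0 by (intro mult_right_mono) auto
        finally have h2: "(1-\<mu>)*(1+(real k+2)*a)*B \<ge> real k * (1+(real k+2)*a)" .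
        have "real k * (1+(real k+2)*a) + (1+\<mu>*a)*(a - real k) = real k*(real k+2)*a - real k*\<mu>*a + (1+\<mu>*a)*a"
          by (simp add: algebra_simps)
        moreover have "real k*\<mu>*a \<le> real k*(real k+2)*a" using m1 a0 by (intro mult_right_mono mult_left_mono) auto
        moreover have "(1+\<mu>*a)*a > 0" using m0 a0 by (intro mult_pos_pos add_pos_pos) auto
        ultimately show ?thesis using h2 by linarith
      qed
    qed
    have r1: "rho k n = 1 + A/(B+1)" unfolding rho_def Suc A_def B_def by simp
    have r2: "rho k (n+1) = 1 + B/(C+1)" unfolding rho_def Suc B_def C_def by simp
    have "1 + A/(B+1) + real k*(1+\<mu>) < (real k+1)*(1 + B/(C+1))"
    proof -
      have e1: "1 + A/(B+1) = 1 + \<mu> - \<mu>*(1+a)/(B+1)" using B1 unfolding A by (simp add: field_simps)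
      have e2: "1 + B/(C+1) = 1 + \<mu> - \<mu>*(1+\<mu>*a)/(C+1)"
      proof -
        have "B = \<mu> * C - \<mu> * (\<mu> * a)" using u_err[OF q, of "Suc m"] unfolding B_def C_def a_def by simp
        then show ?thesis using C1 by (simp add: field_simps)
      qed
      have "(real k+1)*(1+\<mu>*a)*(B+1) < (1+a)*(C+1)" using key pos by linarith
      then have "(real k+1)*(1+\<mu>*a)/(C+1) < (1+a)/(B+1)" using B1 C1 by (simp add: field_simps)
      then have "\<mu>*((real k+1)*(1+\<mu>*a)/(C+1)) < \<mu>*((1+a)/(B+1))" using m0 by (intro mult_strict_left_mono)
      then show ?thesis unfolding e1 e2 by (simp add: algebra_simps)
    qed
    then show ?thesis unfolding r1 r2 ri .
  qed
qed

end
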